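(* Let $E\ge 1$ and for each environment $e=1,\dots,E$ let $p_e(x,y)$ be a (known, positive) joint density of a feature vector $x\in\mathbb{R}^p$ and outcome $y$. Let $p(z)$ be a prior on $\{0,1\}^p$. Consider the model (BIP) for data $\mathcal{D}=\{\{(x_{ei},y_{ei})\}_{i=1}^{n_e}\}_{e=1}^E$ with joint distribution $$p(z,\mathcal{D})=p(z)\prod_{e=1}^E\prod_{i=1}^{n_e}p_e(x_{ei}^z)\,g(y_{ei}\mid x_{ei}^z)\,p_e(x_{ei}^{-z}\mid x_{ei}^z,y_{ei}).$$ Then the posterior distribution satisfies $$p(z\mid\mathcal{D})\propto p(z)\prod_{e=1}^E\prod_{i=1}^{n_e}\frac{g(y_{ei}\mid x_{ei}^z)}{p_e(y_{ei}\mid x_{ei}^z)},$$ where the proportionality constant does not depend on $z$.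
   Context: For $z\in\{0,1\}^p$, $x^z$ is the subvector of $x$ with coordinates $j$ such that $z^{(j)}=1$, and $x^{-z}$ is the subvector of the remaining coordinates. The densities $p_e(x^z)$, $p_e(y\mid x^z)$ and $p_e(x^{-z}\mid x^z,y)$ are the marginal and conditionals derived from $p_e(x,y)$. The pooled conditional is $g(y\mid x^z):=\frac{\sum_{e=1}^E\int p_e(x,y)\,\mathrm{d}x^{-z}}{\sum_{e=1}^E p_e(x^z)}$. *)

theory Defs
  imports "HOL-Probability.Probability"
begin

(* A selection z in {0,1}^p is encoded as the set of selected indices, z \<subseteq> {..<p}.
   x^z = restrict x z,  x^{-z} = restrict x ({..<p} - z).
   A joint density of environment e is f :: (nat => real) => real => real
   w.r.t. (PiM {..<p} lborel) \<Otimes> lborel. *)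

definition Xspace :: "nat \<Rightarrow> (nat \<Rightarrow> real) measure" where
  "Xspace p = PiM {..<p} (\<lambda>_. lborel)"

definition marg_xy :: "nat \<Rightarrow> ((nat \<Rightarrow> real) \<Rightarrow> real \<Rightarrow> real) \<Rightarrow> nat set
    \<Rightarrow> (nat \<Rightarrow> real) \<Rightarrow> real \<Rightarrow> ennreal" where
  "marg_xy p f z xz y =
     (\<integral>\<^sup>+ u. ennreal (f (merge z ({..<p} - z) (xz, u)) y) \<partial>(PiM ({..<p} - z) (\<lambda>_. lborel)))"

definition marg_x :: "nat \<Rightarrow> ((nat \<Rightarrow> real) \<Rightarrow> real \<Rightarrow> real) \<Rightarrow> nat set
    \<Rightarrow> (nat \<Rightarrow> real) \<Rightarrow> ennreal" where
  "marg_x p f z xz = (\<integral>\<^sup>+ y. marg_xy p f z xz y \<partial>lborel)"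

definition dens_xy :: "nat \<Rightarrow> ((nat \<Rightarrow> real) \<Rightarrow> real \<Rightarrow> real) \<Rightarrow> nat set
    \<Rightarrow> (nat \<Rightarrow> real) \<Rightarrow> real \<Rightarrow> real" where
  "dens_xy p f z xz y = enn2real (marg_xy p f z xz y)"

definition dens_x :: "nat \<Rightarrow> ((nat \<Rightarrow> real) \<Rightarrow> real \<Rightarrow> real) \<Rightarrow> nat set
    \<Rightarrow> (nat \<Rightarrow> real) \<Rightarrow> real" where
  "dens_x p f z xz = enn2real (marg_x p f z xz)"

definition cond_y :: "nat \<Rightarrow> ((nat \<Rightarrow> real) \<Rightarrow> real \<Rightarrow> real) \<Rightarrow> nat set
    \<Rightarrow> (nat \<Rightarrow> real) \<Rightarrow> real \<Rightarrow> real" where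
  "cond_y p f z xz y = dens_xy p f z xz y / dens_x p f z xz"

(* p_e(x^{-z} | x^z, y), evaluated at the full vector x *)
definition cond_rest :: "nat \<Rightarrow> ((nat \<Rightarrow> real) \<Rightarrow> real \<Rightarrow> real) \<Rightarrow> nat set
    \<Rightarrow> (nat \<Rightarrow> real) \<Rightarrow> real \<Rightarrow> real" where
  "cond_rest p f z x y = f x y / dens_xy p f z (restrict x z) y"

(* pooled conditional g(y | x^z) *)
definition pooled :: "nat \<Rightarrow> nat \<Rightarrow> (nat \<Rightarrow> (nat \<Rightarrow> real) \<Rightarrow> real \<Rightarrow> real) \<Rightarrow> nat set
    \<Rightarrow> (nat \<Rightarrow> real) \<Rightarrow> real \<Rightarrow> real" where
  "pooled p E pe z xz y =
     (\<Sum>e=1..E. dens_xy p (pe e) z xz y) / (\<Sum>e=1..E. dens_x p (pe e) z xz)"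

definition bip_joint :: "nat \<Rightarrow> nat \<Rightarrow> (nat \<Rightarrow> (nat \<Rightarrow> real) \<Rightarrow> real \<Rightarrow> real)
    \<Rightarrow> (nat set \<Rightarrow> real) \<Rightarrow> (nat \<Rightarrow> nat) \<Rightarrow> (nat \<Rightarrow> nat \<Rightarrow> nat \<Rightarrow> real)
    \<Rightarrow> (nat \<Rightarrow> nat \<Rightarrow> real) \<Rightarrow> nat set \<Rightarrow> real" where
  "bip_joint p E pe prior n X Y z =
     prior z * (\<Prod>e=1..E. \<Prod>i=1..n e.
        dens_x p (pe e) z (restrict (X e i) z)
        * pooled p E pe z (restrict (X e i) z) (Y e i)
        * cond_rest p (pe e) z (X e i) (Y e i))"

definition bip_posterior :: "nat \<Rightarrow> nat \<Rightarrow> (nat \<Rightarrow> (nat \<Rightarrow> real) \<Rightarrow> real \<Rightarrow> real)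
    \<Rightarrow> (nat set \<Rightarrow> real) \<Rightarrow> (nat \<Rightarrow> nat) \<Rightarrow> (nat \<Rightarrow> nat \<Rightarrow> nat \<Rightarrow> real)
    \<Rightarrow> (nat \<Rightarrow> nat \<Rightarrow> real) \<Rightarrow> nat set \<Rightarrow> real" where
  "bip_posterior p E pe prior n X Y z =
     bip_joint p E pe prior n X Y z / (\<Sum>z'\<in>Pow {..<p}. bip_joint p E pe prior n X Y z')"

end

theory Submission
  imports Defs
begin

theorem proposition2:
  fixes p E :: nat
    and pe :: "nat \<Rightarrow> (nat \<Rightarrow> real) \<Rightarrow> real \<Rightarrow> real"
    and prior :: "nat set \<Rightarrow> real"
    and n :: "nat \<Rightarrow> nat"
    and X :: "nat \<Rightarrow> nat \<Rightarrow> nat \<Rightarrow> real"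
    and Y :: "nat \<Rightarrow> nat \<Rightarrow> real"
  assumes E_pos: "E \<ge> 1"
    and meas: "\<And>e. e \<in> {1..E} \<Longrightarrow>
        (\<lambda>(x, y). pe e x y) \<in> borel_measurable (Xspace p \<Otimes>\<^sub>M lborel)"
    and pos: "\<And>e x y. e \<in> {1..E} \<Longrightarrow> x \<in> space (Xspace p) \<Longrightarrow> pe e x y > 0"
    and dens: "\<And>e. e \<in> {1..E} \<Longrightarrow>
        (\<integral>\<^sup>+ w. ennreal (pe e (fst w) (snd w)) \<partial>(Xspace p \<Otimes>\<^sub>M lborel)) = 1"
    and fin_xy: "\<And>e z xz y. e \<in> {1..E} \<Longrightarrow> z \<subseteq> {..<p} \<Longrightarrow>
        xz \<in> space (PiM z (\<lambda>_. lborel)) \<Longrightarrow> marg_xy p (pe e) z xz y < \<infinity>"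
    and fin_x: "\<And>e z xz. e \<in> {1..E} \<Longrightarrow> z \<subseteq> {..<p} \<Longrightarrow>
        xz \<in> space (PiM z (\<lambda>_. lborel)) \<Longrightarrow> marg_x p (pe e) z xz < \<infinity>"
    and prior_nonneg: "\<And>z. z \<subseteq> {..<p} \<Longrightarrow> prior z \<ge> 0"
    and prior_sum: "(\<Sum>z\<in>Pow {..<p}. prior z) = 1"
    and data: "\<And>e i. e \<in> {1..E} \<Longrightarrow> i \<in> {1..n e} \<Longrightarrow> X e i \<in> space (Xspace p)"
  shows "\<exists>C > 0. \<forall>z \<in> Pow {..<p}.
           bip_posterior p E pe prior n X Y z =
             C * prior z * (\<Prod>e=1..E. \<Prod>i=1..n e.
                 pooled p E pe z (restrict (X e i) z) (Y e i)
                 / cond_y p (pe e) z (restrict (X e i) z) (Y e i))"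
proof -
  define R where "R z = (\<Prod>e=1..E. \<Prod>i=1..n e.
                 pooled p E pe z (restrict (X e i) z) (Y e i)
                 / cond_y p (pe e) z (restrict (X e i) z) (Y e i))" for z
  define F where "F = (\<Prod>e=1..E. \<Prod>i=1..n e. pe e (X e i) (Y e i))"
  have F_pos: "F > 0" unfolding F_def
    by (intro prod_pos) (use pos data in auto)
  have trm: "dens_x p (pe e) z (restrict (X e i) z)
        * pooled p E pe z (restrict (X e i) z) (Y e i)
        * cond_rest p (pe e) z (X e i) (Y e i)
      = pe e (X e i) (Y e i) * (pooled p E pe z (restrict (X e i) z) (Y e i)
                 / cond_y p (pe e) z (restrict (X e i) z) (Y e i))" for e i z
    unfolding cond_rest_def cond_y_def
    by (simp add: divide_inverse inverse_mult_distrib mult_ac)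
  have A: "(\<Prod>e=1..E. \<Prod>i=1..n e. pe e (X e i) (Y e i) * (pooled p E pe z (restrict (X e i) z) (Y e i)
                 / cond_y p (pe e) z (restrict (X e i) z) (Y e i))) = F * R z" for z
    unfolding F_def R_def prod.distrib by (rule refl)
  have joint: "bip_joint p E pe prior n X Y z = F * (prior z * R z)" for z
    unfolding bip_joint_def trm A by (rule mult.left_commute)
  have R_nn: "R z \<ge> 0" for z
    unfolding R_def pooled_def cond_y_def dens_xy_def dens_x_def
    by (intro prod_nonneg divide_nonneg_nonneg sum_nonneg) auto
  define T where "T = (\<Sum>z\<in>Pow {..<p}. prior z * R z)"
  have T_nn: "T \<ge> 0" unfolding T_def
    using prior_nonneg R_nn by (intro sum_nonneg mult_nonneg_nonneg) auto
  have S: "(\<Sum>z'\<in>Pow {..<p}. bip_joint p E pe prior n X Y z') = F * T"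
    unfolding joint T_def by (simp add: sum_distrib_left)
  have main: "\<exists>C > 0. \<forall>z \<in> Pow {..<p}. bip_posterior p E pe prior n X Y z = C * prior z * R z"
  proof (cases "T = 0")
    case True
    have fin: "finite (Pow {..<p::nat})" by simp
    have nn: "prior z * R z \<ge> 0" if "z \<in> Pow {..<p}" for z
      using prior_nonneg R_nn that by auto
    have all0: "\<forall>z\<in>Pow {..<p}. prior z * R z = 0"
      using sum_nonneg_eq_0_iff[OF fin nn] True unfolding T_def by simp
    have z0: "prior z * R z = 0" if "z \<in> Pow {..<p}" for z
      using all0 that by (rule bspec)
    show ?thesis
    proof (rule exI[of _ 1], intro conjI ballI)
      fix z assume zz: "z \<in> Pow {..<p}"
      have "bip_posterior p E pe prior n X Y z = 0"
        unfolding bip_posterior_def S True by simp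
      also have "0 = 1 * prior z * R z" using z0[OF zz] by simp
      finally show "bip_posterior p E pe prior n X Y z = 1 * prior z * R z" .
    qed simp
  next
    case False
    with T_nn have "T > 0" by simp
    show ?thesis
    proof (rule exI[of _ "1 / T"], intro conjI ballI)
      show "0 < 1 / T" using \<open>T > 0\<close> by simp
      fix z assume "z \<in> Pow {..<p}"
      have "bip_posterior p E pe prior n X Y z = F * (prior z * R z) / (F * T)"
        unfolding bip_posterior_def S joint ..
      also have "\<dots> = 1 / T * prior z * R z" using F_pos by simp
      finally show "bip_posterior p E pe prior n X Y z = 1 / T * prior z * R z" .
    qed
  qed
  then show ?thesis unfolding R_def .
qed

end
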